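(* For every integer $n\ge 1$, \[C_n=\sum_{k=0}^{n-1}\left(\binom{n-1}{k}^{2}-\binom{n+1}{k+2}\binom{n-3}{k-2}\right),\] where $C_n$ is the $n$th Catalan number and $\binom{a}{b}=0$ whenever $b<0$. *)

theory Defs
  imports Complex_Main
begin

definition catalan :: "nat \<Rightarrow> nat" where
  "catalan n = ((2 * n) choose n) div (n + 1)"

definition ibinom :: "int \<Rightarrow> int \<Rightarrow> int" where
  "ibinom a b = (if b < 0 then 0 else floor ((of_int a :: real) gchoose (nat b)))"

end

theory Submission
  imports Defs
begin

lemma ibinom_nat: "ibinom (int a) (int b) = int (a choose b)"
proof -
  have "(of_int (int a) :: real) gchoose b = real (a choose b)"
    by (simp add: binomial_gbinomial)
  then show ?thesis unfolding ibinom_def by simp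
qed

lemma alg: fixes F G x A B E :: real assumes "G > 0" "x \<ge> 0"
  and hA: "((x+3)*(x+2)*(x+1)*G)^2 * A = (2*x+6)*(2*x+5)*F"
  and hB: "((x+2)*(x+1)*G)^2 * B = F"
  and hE: "(x+4)*(x+3)*(x+2)*(x+1)*G^2 * E = F"
  shows "A = (x+4)*(B-E)"
proof -
  have K: "(x+4)*((x+3)*(x+2)*(x+1)*G)^2 \<noteq> 0" using assms(1,2) by simp
  have "(x+4)*((x+3)*(x+2)*(x+1)*G)^2 * A = (x+4)*((x+3)*(x+2)*(x+1)*G)^2 * ((x+4)*(B-E))"
    using hA hB hE by algebra
  then show ?thesis using K by simp
qed

lemma cat_real:
  "real ((2*m+6) choose (m+3)) = real (m+4) * (real ((2*m+4) choose (m+2)) - real ((2*m+4) choose m))"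
proof -
  have f1: "(fact (2*m+6) :: real) = (2*m+6)*(2*m+5)*fact (2*m+4)"
  proof -
    have "2*m+6 = Suc (Suc (2*m+4))" by simp
    then show ?thesis by (simp only: fact_Suc) (simp add: algebra_simps)
  qed
  have f2: "(fact (m+3) :: real) = (m+3)*(m+2)*(m+1)*fact m"
  proof -
    have "m+3 = Suc (Suc (Suc m))" by simp
    then show ?thesis by (simp only: fact_Suc) (simp add: algebra_simps)
  qed
  have f3: "(fact (m+2) :: real) = (m+2)*(m+1)*fact m"
  proof -
    have "m+2 = Suc (Suc m)" by simp
    then show ?thesis by (simp only: fact_Suc) (simp add: algebra_simps)
  qed
  have f4: "(fact (m+4) :: real) = (m+4)*(m+3)*(m+2)*(m+1)*fact m"
  proof -
    have "m+4 = Suc (Suc (Suc (Suc m)))" by simp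
    then show ?thesis by (simp only: fact_Suc) (simp add: algebra_simps)
  qed
  have n1: "fact (m+3) * fact (m+3) * ((2*m+6) choose (m+3)) = (fact (2*m+6) :: nat)"
  proof -
    have h: "2*m+6 - (m+3) = m+3" "m+3 \<le> 2*m+6" by simp_all
    show ?thesis using binomial_fact_lemma[OF h(2)] unfolding h(1) .
  qed
  have n2: "fact (m+2) * fact (m+2) * ((2*m+4) choose (m+2)) = (fact (2*m+4) :: nat)"
  proof -
    have h: "2*m+4 - (m+2) = m+2" "m+2 \<le> 2*m+4" by simp_all
    show ?thesis using binomial_fact_lemma[OF h(2)] unfolding h(1) .
  qed
  have n3: "fact m * fact (m+4) * ((2*m+4) choose m) = (fact (2*m+4) :: nat)"
  proof -
    have h: "2*m+4 - m = m+4" "m \<le> 2*m+4" by simp_all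
    show ?thesis using binomial_fact_lemma[OF h(2)] unfolding h(1) .
  qed
  have r1: "fact (m+3) * fact (m+3) * real ((2*m+6) choose (m+3)) = fact (2*m+6)"
    using arg_cong[OF n1, of real] by (simp only: of_nat_mult of_nat_fact)
  have r2: "fact (m+2) * fact (m+2) * real ((2*m+4) choose (m+2)) = fact (2*m+4)"
    using arg_cong[OF n2, of real] by (simp only: of_nat_mult of_nat_fact)
  have r3: "fact m * fact (m+4) * real ((2*m+4) choose m) = fact (2*m+4)"
    using arg_cong[OF n3, of real] by (simp only: of_nat_mult of_nat_fact)
  have hA: "((real m+3)*(real m+2)*(real m+1)*fact m)^2 * real ((2*m+6) choose (m+3)) = (2*real m+6)*(2*real m+5)*fact (2*m+4)"
    using r1 unfolding f1 f2 by (simp add: power2_eq_square algebra_simps)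
  have hB: "((real m+2)*(real m+1)*fact m)^2 * real ((2*m+4) choose (m+2)) = fact (2*m+4)"
    using r2 unfolding f3 by (simp add: power2_eq_square algebra_simps)
  have hE: "(real m+4)*(real m+3)*(real m+2)*(real m+1)*fact m^2 * real ((2*m+4) choose m) = fact (2*m+4)"
    using r3 unfolding f4 by (simp add: power2_eq_square algebra_simps)
  have "(fact m::real) > 0" "real m \<ge> 0" by simp_all
  from alg[OF this hA hB hE] show ?thesis by simp
qed

lemma cat_nat:
  "int (catalan (m+3)) = int ((2*m+4) choose (m+2)) - int ((2*m+4) choose m)"
proof -
  have "real ((2*m+6) choose (m+3)) = real (m+4) * (real ((2*m+4) choose (m+2)) - real ((2*m+4) choose m))"
    by (rule cat_real)
  hence h: "of_int (int ((2*m+6) choose (m+3))) = (of_int (int (m+4) * (int ((2*m+4) choose (m+2)) - int ((2*m+4) choose m))) :: real)"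
    by simp
  hence h2: "int ((2*m+6) choose (m+3)) = int (m+4) * (int ((2*m+4) choose (m+2)) - int ((2*m+4) choose m))"
    using of_int_eq_iff by blast
  have "2 * (m+3) = 2*m+6" by simp
  hence "int (catalan (m+3)) = int ((2*m+6) choose (m+3)) div int (m+4)"
    unfolding catalan_def by (simp add: zdiv_int add.commute)
  also have "\<dots> = int ((2*m+4) choose (m+2)) - int ((2*m+4) choose m)"
    unfolding h2 by simp
  finally show ?thesis .
qed

lemma sq_sum: "(\<Sum>k = 0..m+2. (ibinom (int (m+3) - 1) (int k))^2) = int ((2*m+4) choose (m+2))"
proof -
  have "(\<Sum>k = 0..m+2. (ibinom (int (m+3) - 1) (int k))^2) = (\<Sum>k = 0..m+2. int (((m+2) choose k)^2))"
  proof (rule sum.cong)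
    fix k assume "k \<in> {0..m+2}"
    have e: "int (m+3) - 1 = int (m+2)" by simp
    show "(ibinom (int (m+3) - 1) (int k))^2 = int (((m+2) choose k)^2)"
      unfolding e ibinom_nat by simp
  qed simp
  also have "\<dots> = int (\<Sum>k\<le>m+2. ((m+2) choose k)^2)"
    by (simp add: atLeast0AtMost)
  also have "\<dots> = int ((2*m+4) choose (m+2))"
  proof -
    have e: "2*(m+2) = 2*m+4" by simp
    have h: "(\<Sum>k\<le>m+2. ((m+2) choose k)^2) = (2*m+4) choose (m+2)"
      using choose_square_sum[of "m+2"] unfolding e .
    show ?thesis by (simp only: h)
  qed
  finally show ?thesis .
qed

lemma prod_sum: "(\<Sum>k = 0..m+2. ibinom (int (m+3) + 1) (int k + 2) * ibinom (int (m+3) - 3) (int k - 2))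
   = int ((2*m+4) choose m)"
proof -
  define g where "g k = ibinom (int (m+3) + 1) (int k + 2) * ibinom (int (m+3) - 3) (int k - 2)" for k
  have g0: "g 0 = 0" "g 1 = 0" unfolding g_def ibinom_def by simp_all
  have gs: "g (j+2) = int ((m choose j) * ((m+4) choose (m - j)))" if "j \<le> m" for j
  proof -
    have a: "int (m+3) + 1 = int (m+4)" "int (j+2) + 2 = int (j+4)" "int (m+3) - 3 = int m"
      "int (j+2) - 2 = int j" by simp_all
    have "(m+4) choose (j+4) = (m+4) choose (m - j)"
      using binomial_symmetric[of "j+4" "m+4"] that by simp
    then show ?thesis unfolding g_def a ibinom_nat by simp
  qed
  have "(\<Sum>k = 0..Suc (Suc m). g k) = g 0 + g 1 + (\<Sum>j = 0..m. g (j+2))"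
    by (simp only: sum.atLeast0_atMost_Suc_shift comp_def add.assoc) (simp only: Suc_eq_plus1 add.assoc one_add_one add_0_left)
  also have "\<dots> = (\<Sum>j = 0..m. int ((m choose j) * ((m+4) choose (m - j))))"
  proof -
    have "(\<Sum>j = 0..m. g (j+2)) = (\<Sum>j = 0..m. int ((m choose j) * ((m+4) choose (m - j))))"
    proof (rule sum.cong)
      fix j assume "j \<in> {0..m}"
      then have "j \<le> m" by simp
      then show "g (j+2) = int ((m choose j) * ((m+4) choose (m - j)))" by (rule gs)
    qed (rule refl)
    then show ?thesis by (simp only: g0 add_0_left)
  qed
  also have "\<dots> = int (\<Sum>j\<le>m. (m choose j) * ((m+4) choose (m - j)))"
    by (simp only: atLeast0AtMost of_nat_sum)
  also have "\<dots> = int ((2*m+4) choose m)"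
  proof -
    have e: "m + (m+4) = 2*m+4" by simp
    have h: "(\<Sum>j\<le>m. (m choose j) * ((m+4) choose (m - j))) = (2*m+4) choose m"
      using vandermonde[of m "m+4" m] unfolding e .
    show ?thesis by (simp only: h)
  qed
  finally have X: "(\<Sum>k = 0..Suc (Suc m). g k) = int ((2*m+4) choose m)" .
  have e': "m+2 = Suc (Suc m)" by simp
  show ?thesis unfolding g_def[symmetric] e' by (rule X)
qed

lemma c1: "int (catalan 1) = (\<Sum>k = 0..1 - 1. (ibinom (int 1 - 1) (int k))^2
        - ibinom (int 1 + 1) (int k + 2) * ibinom (int 1 - 3) (int k - 2))"
proof -
  have d: "(2::nat) div 2 = 1" by simp
  have "catalan 1 = 1" unfolding catalan_def by (simp only: mult_1_right choose_one one_add_one d)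
  moreover have "ibinom 0 0 = 1" using ibinom_nat[of 0 0] by simp
  moreover have "ibinom (-2) (-2) = 0" by (simp add: ibinom_def)
  ultimately show ?thesis by simp
qed
lemma c2: "int (catalan 2) = (\<Sum>k = 0..2 - 1. (ibinom (int 2 - 1) (int k))^2
        - ibinom (int 2 + 1) (int k + 2) * ibinom (int 2 - 3) (int k - 2))"
proof -
  have "catalan 2 = 2" unfolding catalan_def by (simp add: choose_two)
  moreover have "ibinom 1 0 = 1" using ibinom_nat[of 1 0] by simp
  moreover have "ibinom 1 1 = 1" using ibinom_nat[of 1 1] by simp
  moreover have "ibinom (-1) (-2) = 0" "ibinom (-1) (-1) = 0" by (simp_all add: ibinom_def)
  moreover have "{0..2-1::nat} = {0,1}" by auto
  ultimately show ?thesis by simp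
qed

theorem mainTheorem7:
  fixes n :: nat
  assumes "n \<ge> 1"
  shows "int (catalan n) =
    (\<Sum>k = 0..n - 1. (ibinom (int n - 1) (int k))^2
        - ibinom (int n + 1) (int k + 2) * ibinom (int n - 3) (int k - 2))"
proof -
  have "n = 1 \<or> n = 2 \<or> (\<exists>m. n = m + 3)"
  proof (cases "n \<ge> 3")
    case True
    then have "n = (n - 3) + 3" by simp
    then show ?thesis by blast
  next
    case False then show ?thesis using assms by auto
  qed
  moreover have ?thesis if "n = 1" unfolding that by (rule c1)
  moreover have ?thesis if "n = 2" unfolding that by (rule c2)
  moreover have ?thesis if "n = m + 3" for m
  proof -
    have e: "m + 3 - 1 = m + 2" by simp
    show ?thesis unfolding that e sum_subtractf sq_sum prod_sum cat_nat ..
  qed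
  ultimately show ?thesis by blast
qed

end
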